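(* Let $P$ be a subgroup of $I_K(\mathfrak{n})$ with $P_{K,1}(\mathfrak{n})\subseteq P\subseteq P_K(\mathfrak{n})$ and let $\Gamma$ be any subgroup of $\mathrm{SL}_2(\mathbb{Z})$. Suppose the map $\phi_\Gamma:\mathcal{Q}_N(d_K)/\sim_\Gamma\to I_K(\mathfrak{n})/P$, $[Q]\mapsto[[\omega_Q,1]]$, is well defined (i.e. $Q\sim_\Gamma Q'$ implies $[\omega_Q,1]P=[\omega_{Q'},1]P$). Then $\phi_\Gamma$ is surjective.
   Context: Let $K$ be an imaginary quadratic field with discriminant $d_K$ and ring of integers $\mathcal{O}_K$. Let $N$ be a positive integer and $\mathfrak{n}=N\mathcal{O}_K$. $I_K(\mathfrak{n})$ denotes the group of fractional ideals of $K$ relatively prime to $\mathfrak{n}$, $P_K(\mathfrak{n})$ its subgroup of principal fractional ideals, and $P_{K,1}(\mathfrak{n})=\{\nu\mathcal{O}_K:\nu\in K^*,\ \nu\equiv^*1\pmod{\mathfrak{n}}\}$, where $\equiv^*$ is multiplicative congruence. $\mathcal{Q}(d_K)$ is the set of primitive positive definite binary quadratic forms $ax^2+bxy+cy^2\in\mathbb{Z}[x,y]$ with $b^2-4ac=d_K$, and $\mathcal{Q}_N(d_K)=\{ax^2+bxy+cy^2\in\mathcal{Q}(d_K):\gcd(N,a)=1\}$. For $Q=ax^2+bxy+cy^2\in\mathcal{Q}(d_K)$, $\omega_Q=(-b+\sqrt{d_K})/(2a)\in\mathbb{H}$ and $[\omega_Q,1]=\mathbb{Z}\omega_Q+\mathbb{Z}$,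 which is a fractional ideal of $K$ lying in $I_K(\mathfrak{n})$ when $Q\in\mathcal{Q}_N(d_K)$. For $\gamma\in\mathrm{SL}_2(\mathbb{Z})$, $Q^\gamma(x,y)=Q(\gamma\,(x,y)^T)$. For a subgroup $\Gamma\subseteq\mathrm{SL}_2(\mathbb{Z})$, the relation $\sim_\Gamma$ on $\mathcal{Q}_N(d_K)$ is: $Q\sim_\Gamma Q'$ iff $Q'=Q^\gamma$ for some $\gamma\in\Gamma$. *)

theory Defs
  imports Complex_Main "HOL-Algebra.Coset" "HOL-Computational_Algebra.Squarefree"
begin

definition fundamental_disc :: "int \<Rightarrow> bool" where
  "fundamental_disc d \<longleftrightarrow> d \<noteq> 1 \<and>
     ((d mod 4 = 1 \<and> squarefree d) \<or>
      (\<exists>m. d = 4 * m \<and> (m mod 4 = 2 \<or> m mod 4 = 3) \<and> squarefree m))"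

definition sqrt_disc :: "int \<Rightarrow> complex" where
  "sqrt_disc d = \<i> * complex_of_real (sqrt (real_of_int (- d)))"

definition Kfield :: "int \<Rightarrow> complex set" where
  "Kfield d = {of_rat x + of_rat y * sqrt_disc d | x y. True}"

definition OK :: "int \<Rightarrow> complex set" where
  "OK d = {of_int x + of_int y * ((of_int d + sqrt_disc d) / 2) | x y. True}"

definition OK_span :: "int \<Rightarrow> complex list \<Rightarrow> complex set" where
  "OK_span d gs = {sum_list (map2 (*) rs gs) | rs. length rs = length gs \<and> set rs \<subseteq> OK d}"

definition frac_ideal :: "int \<Rightarrow> complex set \<Rightarrow> bool" where
  "frac_ideal d A \<longleftrightarrow> (\<exists>gs. set gs \<subseteq> Kfield d \<and> A = OK_span d gs) \<and> A \<noteq> {0}"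

definition ideal_mult :: "complex set \<Rightarrow> complex set \<Rightarrow> complex set" where
  "ideal_mult A B = {sum_list (map2 (*) as bs) | as bs.
       length as = length bs \<and> set as \<subseteq> A \<and> set bs \<subseteq> B}"

definition principal :: "int \<Rightarrow> complex \<Rightarrow> complex set" where
  "principal d \<nu> = (\<lambda>x. \<nu> * x) ` OK d"

definition nideal :: "int \<Rightarrow> nat \<Rightarrow> complex set" where
  "nideal d N = principal d (of_nat N)"

definition coprime_integral :: "int \<Rightarrow> nat \<Rightarrow> complex set \<Rightarrow> bool" where
  "coprime_integral d N B \<longleftrightarrow> frac_ideal d B \<and> B \<subseteq> OK d \<and>
     {b + c | b c. b \<in> B \<and> c \<in> nideal d N} = OK d"

text \<open>I_K(n): fractional ideals relatively prime to n, i.e. of the form B C^{-1}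
  with B, C integral ideals coprime to n (equivalently A C = B).\<close>
definition IK_set :: "int \<Rightarrow> nat \<Rightarrow> complex set set" where
  "IK_set d N = {A. frac_ideal d A \<and>
     (\<exists>B C. coprime_integral d N B \<and> coprime_integral d N C \<and> ideal_mult A C = B)}"

definition IK :: "int \<Rightarrow> nat \<Rightarrow> complex set monoid" where
  "IK d N = \<lparr>carrier = IK_set d N, monoid.mult = ideal_mult, one = OK d\<rparr>"

definition PK :: "int \<Rightarrow> nat \<Rightarrow> complex set set" where
  "PK d N = {principal d \<nu> | \<nu>. \<nu> \<in> Kfield d \<and> \<nu> \<noteq> 0 \<and> principal d \<nu> \<in> IK_set d N}"

definition mult_cong_one :: "int \<Rightarrow> nat \<Rightarrow> complex \<Rightarrow> bool" where
  "mult_cong_one d N \<nu> \<longleftrightarrow> (\<exists>\<alpha> \<beta>. \<alpha> \<in> OK d \<and> \<beta> \<in> OK d \<and> \<alpha> \<noteq> 0 \<and> \<beta> \<noteq> 0 \<and>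
      coprime_integral d N (principal d \<alpha>) \<and> coprime_integral d N (principal d \<beta>) \<and>
      \<nu> = \<alpha> / \<beta> \<and> \<alpha> - \<beta> \<in> nideal d N)"

definition PK1 :: "int \<Rightarrow> nat \<Rightarrow> complex set set" where
  "PK1 d N = {principal d \<nu> | \<nu>. \<nu> \<in> Kfield d \<and> \<nu> \<noteq> 0 \<and> mult_cong_one d N \<nu>}"

section \<open>Binary quadratic forms; a form a x^2 + b x y + c y^2 is the triple (a,b,c)\<close>

definition Qforms :: "int \<Rightarrow> (int \<times> int \<times> int) set" where
  "Qforms d = {(a, b, c). b^2 - 4 * a * c = d \<and> a > 0 \<and> c > 0 \<and> gcd (gcd a b) c = 1}"

definition QformsN :: "int \<Rightarrow> nat \<Rightarrow> (int \<times> int \<times> int) set" where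
  "QformsN d N = {(a, b, c) \<in> Qforms d. coprime (int N) a}"

definition omegaQ :: "int \<Rightarrow> int \<times> int \<times> int \<Rightarrow> complex" where
  "omegaQ d Q = (case Q of (a, b, c) \<Rightarrow> (- of_int b + sqrt_disc d) / (2 * of_int a))"

definition latQ :: "int \<Rightarrow> int \<times> int \<times> int \<Rightarrow> complex set" where
  "latQ d Q = {of_int m * omegaQ d Q + of_int n | m n. True}"

text \<open>SL_2(Z): a matrix [[p,q],[r,s]] is the tuple (p,q,r,s).\<close>
definition sl2_mult :: "int \<times> int \<times> int \<times> int \<Rightarrow> int \<times> int \<times> int \<times> int \<Rightarrow> int \<times> int \<times> int \<times> int" where
  "sl2_mult g h = (case g of (p, q, r, s) \<Rightarrow> case h of (p', q', r', s') \<Rightarrow>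
     (p * p' + q * r', p * q' + q * s', r * p' + s * r', r * q' + s * s'))"

definition SL2Z :: "(int \<times> int \<times> int \<times> int) monoid" where
  "SL2Z = \<lparr>carrier = {(p, q, r, s). p * s - q * r = 1}, monoid.mult = sl2_mult, one = (1, 0, 0, 1)\<rparr>"

text \<open>Q^gamma(x,y) = Q(p x + q y, r x + s y).\<close>
definition form_act :: "int \<times> int \<times> int \<Rightarrow> int \<times> int \<times> int \<times> int \<Rightarrow> int \<times> int \<times> int" where
  "form_act Q g = (case Q of (a, b, c) \<Rightarrow> case g of (p, q, r, s) \<Rightarrow>
     (a * p^2 + b * p * r + c * r^2,
      2 * a * p * q + b * (p * s + q * r) + 2 * c * r * s,
      a * q^2 + b * q * s + c * s^2))"

definition form_equiv :: "(int \<times> int \<times> int \<times> int) set \<Rightarrow> int \<times> int \<times> int \<Rightarrow> int \<times> int \<times> int \<Rightarrow> bool" where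
  "form_equiv \<Gamma> Q Q' \<longleftrightarrow> (\<exists>g\<in>\<Gamma>. Q' = form_act Q g)"

end

theory Submission
  imports Defs
begin


definition th :: "int \<Rightarrow> complex" where
  "th d = (of_int d + sqrt_disc d) / 2"

lemma sd_sq: "d < 0 \<Longrightarrow> sqrt_disc d * sqrt_disc d = of_int d"
proof -
  assume "d < 0"
  have 1: "sqrt (real_of_int (-d)) * sqrt (real_of_int (-d)) = real_of_int (-d)"
    using \<open>d<0\<close> by simp
  have "sqrt_disc d * sqrt_disc d = (\<i>*\<i>) * complex_of_real (sqrt (real_of_int (-d)) * sqrt (real_of_int (-d)))"
    unfolding sqrt_disc_def by (simp only: of_real_mult mult_ac)
  also have "\<dots> = of_int d" unfolding 1 by simp
  finally show ?thesis .
qed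

lemma Re_sd[simp]: "Re (sqrt_disc d) = 0" by (simp add: sqrt_disc_def)
lemma Im_sd[simp]: "Im (sqrt_disc d) = sqrt (real_of_int (-d))" by (simp add: sqrt_disc_def)
lemma Re_th[simp]: "Re (th d) = real_of_int d / 2" by (simp add: th_def)
lemma Im_th[simp]: "Im (th d) = sqrt (real_of_int (-d)) / 2" by (simp add: th_def)
lemma Im_th_pos: "d < 0 \<Longrightarrow> Im (th d) > 0" by simp

lemma OK_th: "OK d = {of_int x + of_int y * th d | x y. True}"
  unfolding OK_def th_def by simp

lemma th_sq: "d < 0 \<Longrightarrow> th d * th d = of_int d * th d + (of_int d - of_int d * of_int d) / 4"
proof -
  assume "d<0"
  have "th d * th d = (of_int d * of_int d + 2 * of_int d * sqrt_disc d + sqrt_disc d * sqrt_disc d)/4"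
    unfolding th_def by (simp add: field_simps)
  then show ?thesis using sd_sq[OF \<open>d<0\<close>] unfolding th_def by (simp add: field_simps)
qed


locale qf =
  fixes d :: int
  assumes dneg: "d < 0" and d4: "4 dvd (d - d*d)"
begin

abbreviation "\<theta> \<equiv> th d"
definition "ee = (d - d*d) div 4"

lemma ee: "(of_int d - of_int d * of_int d) / 4 = (of_int ee :: complex)"
proof -
  have "d - d*d = 4 * ee" using d4 unfolding ee_def by auto
  then have "(of_int (d - d*d) :: complex) = 4 * of_int ee" by (metis of_int_mult of_int_numeral)
  then show ?thesis by simp
qed

lemma th_sq': "\<theta> * \<theta> = of_int d * \<theta> + of_int ee"
  using th_sq[OF dneg] ee by simp

lemma OK_mem: "z \<in> OK d \<longleftrightarrow> (\<exists>x y. z = of_int x + of_int y * \<theta>)"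
  unfolding OK_th by auto

lemma OK_int[simp]: "of_int x \<in> OK d"
  unfolding OK_mem by (rule exI[of _ x], rule exI[of _ 0]) simp

lemma OK_0[simp]: "0 \<in> OK d" using OK_int[of 0] by simp
lemma OK_1[simp]: "1 \<in> OK d" using OK_int[of 1] by simp
lemma OK_nat[simp]: "of_nat n \<in> OK d" using OK_int[of "int n"] by simp

lemma OK_th_mem[simp]: "\<theta> \<in> OK d"
  unfolding OK_mem by (rule exI[of _ 0], rule exI[of _ 1]) simp

lemma OK_add[intro]: "a \<in> OK d \<Longrightarrow> b \<in> OK d \<Longrightarrow> a + b \<in> OK d"
  unfolding OK_mem
proof (elim exE)
  fix x y x' y' assume "a = of_int x + of_int y * \<theta>" "b = of_int x' + of_int y' * \<theta>"
  then show "\<exists>x y. a + b = of_int x + of_int y * \<theta>"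
    by (intro exI[of _ "x+x'"] exI[of _ "y+y'"]) (simp add: algebra_simps)
qed

lemma OK_uminus[intro]: "a \<in> OK d \<Longrightarrow> - a \<in> OK d"
  unfolding OK_mem
proof (elim exE)
  fix x y assume "a = of_int x + of_int y * \<theta>"
  then show "\<exists>x y. - a = of_int x + of_int y * \<theta>"
    by (intro exI[of _ "-x"] exI[of _ "-y"]) (simp add: algebra_simps)
qed

lemma OK_diff[intro]: "a \<in> OK d \<Longrightarrow> b \<in> OK d \<Longrightarrow> a - b \<in> OK d"
  using OK_add OK_uminus by (metis diff_conv_add_uminus)

lemma OK_mult[intro]: "a \<in> OK d \<Longrightarrow> b \<in> OK d \<Longrightarrow> a * b \<in> OK d"
  unfolding OK_mem
proof (elim exE)
  fix x y x' y' assume a: "a = of_int x + of_int y * \<theta>" and b: "b = of_int x' + of_int y' * \<theta>"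
  have "a * b = of_int x * of_int x' + (of_int x * of_int y' + of_int y * of_int x') * \<theta>
      + of_int y * of_int y' * (\<theta> * \<theta>)" unfolding a b by (simp add: algebra_simps)
  also have "\<dots> = of_int (x*x' + y*y'*ee) + of_int (x*y' + y*x' + y*y'*d) * \<theta>"
    unfolding th_sq' by (simp add: algebra_simps)
  finally show "\<exists>x y. a * b = of_int x + of_int y * \<theta>" by blast
qed

lemma coord_unique:
  assumes "of_int x + of_int y * \<theta> = (of_int x' + of_int y' * \<theta> :: complex)"
  shows "x = x' \<and> y = y'"
proof -
  from arg_cong[OF assms, of Im] have "real_of_int y * Im \<theta> = real_of_int y' * Im \<theta>" by simp
  then have "y = y'" using Im_th_pos[OF dneg] by simp
  with assms show ?thesis by simp
qed

lemma OK_real: "z \<in> OK d \<Longrightarrow> Im z = 0 \<Longrightarrow> \<exists>x. z = of_int x"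
  unfolding OK_mem using Im_th_pos[OF dneg] by auto

lemma cnj_th: "cnj \<theta> = of_int d - \<theta>"
  by (simp add: complex_eq_iff)

lemma OK_cnj[intro]: "z \<in> OK d \<Longrightarrow> cnj z \<in> OK d"
  unfolding OK_mem
proof (elim exE)
  fix x y assume "z = of_int x + of_int y * \<theta>"
  then have "cnj z = of_int (x + y*d) + of_int (-y) * \<theta>" by (simp add: cnj_th algebra_simps)
  then show "\<exists>x y. cnj z = of_int x + of_int y * \<theta>" by blast
qed

lemma OK_norm_int: "z \<in> OK d \<Longrightarrow> \<exists>n. z * cnj z = of_int n"
  by (rule OK_real) (auto simp: complex_eq_iff algebra_simps)

end


lemma list_in_image: "set as \<subseteq> f ` S \<Longrightarrow> \<exists>rs. as = map f rs \<and> set rs \<subseteq> S"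
proof (induction as)
  case Nil then show ?case by simp
next
  case (Cons a as)
  then obtain rs where "as = map f rs" "set rs \<subseteq> S" by auto
  moreover obtain r where "r \<in> S" "a = f r" using Cons.prems by auto
  ultimately show ?case by (intro exI[of _ "r # rs"]) auto
qed

lemma sum_map2_scale: "sum_list (map2 (*) (map ((*) c) rs) xs) = (c::complex) * sum_list (map2 (*) rs xs)"
  by (induction rs xs rule: list_induct2') (auto simp: algebra_simps)

lemma sum_map2_scale2: "sum_list (map2 (*) rs (map ((*) c) xs)) = (c::complex) * sum_list (map2 (*) rs xs)"
  by (induction rs xs rule: list_induct2') (auto simp: algebra_simps)

lemma sum_map2_comm: "sum_list (map2 (*) as bs) = sum_list (map2 (*) bs (as::complex list))"
  by (induction as bs rule: list_induct2') (auto simp: algebra_simps)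

lemma map2_comm_len: "length (map2 f as bs) = length (map2 g bs as)" by simp

lemma ideal_mult_comm: "ideal_mult A B = ideal_mult B A"
  unfolding ideal_mult_def
  by (metis (no_types, lifting) sum_map2_comm)

lemma sum_map2_add: "length rs = length gs \<Longrightarrow> length rs' = length gs \<Longrightarrow>
  sum_list (map2 (*) (map2 (+) rs rs') gs) = sum_list (map2 (*) rs gs) + sum_list (map2 (*) rs' (gs::complex list))"
proof (induction gs arbitrary: rs rs')
  case Nil then show ?case by simp
next
  case (Cons g gs)
  then obtain r rs0 r' rs0' where "rs = r # rs0" "rs' = r' # rs0'"
    by (metis length_Suc_conv)
  with Cons show ?case by (simp add: algebra_simps)
qed

lemma sum_map2_zero: "sum_list (map2 (*) (replicate n 0) (gs::complex list)) = 0"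
  by (induction n arbitrary: gs) (auto, case_tac gs, auto)

context qf begin

definition OKmod :: "complex set \<Rightarrow> bool" where
  "OKmod X \<longleftrightarrow> 0 \<in> X \<and> (\<forall>x\<in>X. \<forall>y\<in>X. x + y \<in> X) \<and> (\<forall>r\<in>OK d. \<forall>x\<in>X. r * x \<in> X)"

lemma OKmodD: assumes "OKmod X"
  shows "0 \<in> X" "x \<in> X \<Longrightarrow> y \<in> X \<Longrightarrow> x + y \<in> X" "r \<in> OK d \<Longrightarrow> x \<in> X \<Longrightarrow> r * x \<in> X"
  using assms unfolding OKmod_def by auto

lemma OKmod_uminus: "OKmod X \<Longrightarrow> x \<in> X \<Longrightarrow> - x \<in> X"
  using OKmodD(3)[of X "-1" x] OK_int[of "-1"] by simp

lemma OKmod_diff: "OKmod X \<Longrightarrow> x \<in> X \<Longrightarrow> y \<in> X \<Longrightarrow> x - y \<in> X"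
  using OKmodD(2) OKmod_uminus by (metis diff_conv_add_uminus)

lemma OKmod_int: "OKmod X \<Longrightarrow> x \<in> X \<Longrightarrow> of_int m * x \<in> X"
  using OKmodD(3) OK_int by blast

lemma OKmod_OK: "OKmod (OK d)" unfolding OKmod_def by auto

lemma sum_map2_mem: "OKmod X \<Longrightarrow> length rs = length xs \<Longrightarrow> set rs \<subseteq> OK d \<Longrightarrow> set xs \<subseteq> X
   \<Longrightarrow> sum_list (map2 (*) rs xs) \<in> X"
proof (induction rs arbitrary: xs)
  case Nil then show ?case by (simp add: OKmodD)
next
  case (Cons r rs)
  then obtain x xs0 where "xs = x # xs0" by (metis length_Suc_conv)
  with Cons.prems have "r \<in> OK d" "x \<in> X" "sum_list (map2 (*) rs xs0) \<in> X"
    using Cons.IH[of xs0] by auto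
  then show ?case using \<open>xs = x # xs0\<close> OKmodD[OF Cons.prems(1)] by simp
qed

lemma OK_span_mod: "OKmod (OK_span d gs)"
  unfolding OKmod_def
proof (intro conjI ballI)
  show "0 \<in> OK_span d gs" unfolding OK_span_def
    by (rule CollectI, rule exI[of _ "replicate (length gs) 0"]) (auto simp add: sum_map2_zero)
next
  fix x y assume "x \<in> OK_span d gs" "y \<in> OK_span d gs"
  then obtain rs rs' where "x = sum_list (map2 (*) rs gs)" "length rs = length gs" "set rs \<subseteq> OK d"
     "y = sum_list (map2 (*) rs' gs)" "length rs' = length gs" "set rs' \<subseteq> OK d"
    unfolding OK_span_def by auto
  then show "x + y \<in> OK_span d gs" unfolding OK_span_def
    apply (intro CollectI exI[of _ "map2 (+) rs rs'"])
    apply (simp add: sum_map2_add)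
    by (auto dest!: set_zip_leftD set_zip_rightD elim!: in_set_zipE)
next
  fix r x assume "r \<in> OK d" "x \<in> OK_span d gs"
  then obtain rs where "x = sum_list (map2 (*) rs gs)" "length rs = length gs" "set rs \<subseteq> OK d"
    unfolding OK_span_def by auto
  with \<open>r \<in> OK d\<close> show "r * x \<in> OK_span d gs" unfolding OK_span_def
    by (intro CollectI exI[of _ "map ((*) r) rs"]) (auto simp: sum_map2_scale)
qed

lemma frac_mod: "frac_ideal d A \<Longrightarrow> OKmod A"
  unfolding frac_ideal_def using OK_span_mod by auto

lemma scale_mod: "OKmod X \<Longrightarrow> OKmod ((*) c ` X)"
  unfolding OKmod_def
  apply (auto simp: image_iff)
  by (metis distrib_left)

lemma principal_span: "principal d \<nu> = OK_span d [\<nu>]"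
proof -
  have "OK_span d [\<nu>] = {r * \<nu> | r. r \<in> OK d}"
    unfolding OK_span_def
    by (auto simp: length_Suc_conv) (rule exI[of _ "[_]"], auto)
  then show ?thesis unfolding principal_def by (auto simp: mult.commute)
qed

lemma principal_mod: "OKmod (principal d \<nu>)"
  using principal_span OK_span_mod by simp

lemma mult_principal: assumes "OKmod X"
  shows "ideal_mult (principal d \<nu>) X = (*) \<nu> ` X"
proof
  show "ideal_mult (principal d \<nu>) X \<subseteq> (*) \<nu> ` X"
  proof
    fix z assume "z \<in> ideal_mult (principal d \<nu>) X"
    then obtain as xs where z: "z = sum_list (map2 (*) as xs)" "length as = length xs"
      "set as \<subseteq> principal d \<nu>" "set xs \<subseteq> X" unfolding ideal_mult_def by auto
    then obtain rs where "as = map ((*) \<nu>) rs" "set rs \<subseteq> OK d"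
      using list_in_image[of as "(*) \<nu>" "OK d"] unfolding principal_def by auto
    with z have "z = \<nu> * sum_list (map2 (*) rs xs)" by (simp add: sum_map2_scale)
    moreover have "sum_list (map2 (*) rs xs) \<in> X"
      using sum_map2_mem[OF assms] z \<open>as = _\<close> \<open>set rs \<subseteq> _\<close> by simp
    ultimately show "z \<in> (*) \<nu> ` X" by blast
  qed
next
  show "(*) \<nu> ` X \<subseteq> ideal_mult (principal d \<nu>) X"
  proof
    fix z assume "z \<in> (*) \<nu> ` X"
    then obtain x where "x \<in> X" "z = \<nu> * x" by auto
    moreover have "\<nu> \<in> principal d \<nu>" unfolding principal_def using OK_1 by force
    ultimately show "z \<in> ideal_mult (principal d \<nu>) X" unfolding ideal_mult_def
      by (intro CollectI exI[of _ "[\<nu>]"] exI[of _ "[x]"]) auto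
  qed
qed

lemma mult_principal2: "OKmod X \<Longrightarrow> ideal_mult X (principal d \<nu>) = (*) \<nu> ` X"
  using mult_principal ideal_mult_comm by metis

lemma principal_1: "principal d 1 = OK d" unfolding principal_def by simp

lemma principal_mult: "principal d a = (*) a ` OK d" unfolding principal_def by simp


lemma sd_sq_rat: "sqrt_disc d * sqrt_disc d = of_rat (of_int d)"
  using sd_sq[OF dneg] by (simp add: of_rat_of_int_eq)

lemma OK_Kfield: "z \<in> OK d \<Longrightarrow> z \<in> Kfield d"
  unfolding OK_def Kfield_def
proof (clarify)
  fix x y
  have "(of_int x + of_int y * ((of_int d + sqrt_disc d) / 2) :: complex)
      = of_rat (of_int x + of_int y * of_int d / 2) + of_rat (of_int y / 2) * sqrt_disc d"
    by (simp add: of_rat_add of_rat_mult of_rat_divide of_rat_of_int_eq field_simps)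
  then show "\<exists>xa ya. of_int x + of_int y * ((of_int d + sqrt_disc d) / 2) =
         of_rat xa + of_rat ya * sqrt_disc d \<and> True" by blast
qed

lemma Kfield_mult: "a \<in> Kfield d \<Longrightarrow> b \<in> Kfield d \<Longrightarrow> a * b \<in> Kfield d"
  unfolding Kfield_def
proof (clarify)
  fix x y x' y' :: rat
  have "(of_rat x + of_rat y * sqrt_disc d) * (of_rat x' + of_rat y' * sqrt_disc d)
     = of_rat x * of_rat x' + of_rat y * of_rat y' * (sqrt_disc d * sqrt_disc d)
       + (of_rat x * of_rat y' + of_rat y * of_rat x') * sqrt_disc d"
    by (simp add: algebra_simps)
  also have "\<dots> = of_rat (x*x' + y*y'*of_int d) + of_rat (x*y' + y*x') * sqrt_disc d"
    unfolding sd_sq_rat by (simp add: of_rat_add of_rat_mult)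
  finally show "\<exists>xa ya. (of_rat x + of_rat y * sqrt_disc d) * (of_rat x' + of_rat y' * sqrt_disc d) =
         of_rat xa + of_rat ya * sqrt_disc d \<and> True" by blast
qed

lemma Kfield_inverse: assumes "a \<in> Kfield d" shows "inverse a \<in> Kfield d"
proof -
  obtain x y where a: "a = of_rat x + of_rat y * sqrt_disc d" using assms unfolding Kfield_def by auto
  define n where "n = x*x - of_int d * y*y"
  show ?thesis
  proof (cases "n = 0")
    case True
    have xx: "x*x \<ge> 0" by simp
    have "y * y \<ge> 0" by simp
    moreover have "- of_int d \<ge> (0::rat)" using dneg by simp
    ultimately have "- of_int d * (y * y) \<ge> 0" by (rule mult_nonneg_nonneg[rotated])
    then have "- of_int d * y * y \<ge> 0" by (simp add: mult.assoc)
    then have "x*x = 0" "- of_int d * y * y = 0" using True xx unfolding n_def by linarith+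
    then have "x = 0" "y = 0" using dneg by auto
    then have "inverse a = of_rat 0 + of_rat 0 * sqrt_disc d" using a by simp
    then show ?thesis unfolding Kfield_def by blast
  next
    case False
    have "a * (of_rat x - of_rat y * sqrt_disc d) = of_rat x * of_rat x - of_rat y * of_rat y * (sqrt_disc d * sqrt_disc d)"
      unfolding a by (simp add: algebra_simps)
    also have "\<dots> = of_rat n" unfolding sd_sq_rat n_def by (simp add: of_rat_diff of_rat_mult)
    finally have e: "a * (of_rat x - of_rat y * sqrt_disc d) = of_rat n" .
    have "(of_rat n :: complex) \<noteq> 0" using False by simp
    then have "inverse a = (of_rat x - of_rat y * sqrt_disc d) / of_rat n"
    proof -
      have "a \<noteq> 0" using e \<open>(of_rat n :: complex) \<noteq> 0\<close> by auto
      then show ?thesis using e \<open>(of_rat n :: complex) \<noteq> 0\<close> by (simp add: field_simps)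
    qed
    also have "\<dots> = of_rat (x / n) + of_rat (- y / n) * sqrt_disc d"
      by (simp add: of_rat_divide of_rat_minus diff_divide_distrib)
    finally show ?thesis unfolding Kfield_def by blast
  qed
qed

lemma Kfield_divide: "a \<in> Kfield d \<Longrightarrow> b \<in> Kfield d \<Longrightarrow> a / b \<in> Kfield d"
  using Kfield_mult Kfield_inverse by (simp add: divide_inverse)

end


context qf begin
lemma frac_principal: "\<nu> \<in> Kfield d \<Longrightarrow> \<nu> \<noteq> 0 \<Longrightarrow> frac_ideal d (principal d \<nu>)"
  unfolding frac_ideal_def
proof (intro conjI)
  assume "\<nu> \<in> Kfield d" "\<nu> \<noteq> 0"
  then show "\<exists>gs. set gs \<subseteq> Kfield d \<and> principal d \<nu> = OK_span d gs"
    using principal_span by (intro exI[of _ "[\<nu>]"]) auto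
  have "\<nu> \<in> principal d \<nu>" unfolding principal_def using OK_1 by force
  then show "principal d \<nu> \<noteq> {0}" using \<open>\<nu> \<noteq> 0\<close> by auto
qed

lemma nideal_mem: "z \<in> nideal d N \<longleftrightarrow> (\<exists>w\<in>OK d. z = of_nat N * w)"
  unfolding nideal_def principal_def by auto

lemma coprime_principal:
  assumes "x \<in> OK d" "x \<noteq> 0" "x - 1 \<in> nideal d N"
  shows "coprime_integral d N (principal d x)"
  unfolding coprime_integral_def
proof (intro conjI)
  show "frac_ideal d (principal d x)" using assms OK_Kfield frac_principal by auto
  show "principal d x \<subseteq> OK d" unfolding principal_def using assms by auto
  obtain w where w: "w \<in> OK d" "x - 1 = of_nat N * w" using assms nideal_mem by auto
  show "{b + c |b c. b \<in> principal d x \<and> c \<in> nideal d N} = OK d"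
  proof
    show "{b + c |b c. b \<in> principal d x \<and> c \<in> nideal d N} \<subseteq> OK d"
      unfolding principal_def nideal_mem using assms by (auto intro!: OK_add OK_mult)
    show "OK d \<subseteq> {b + c |b c. b \<in> principal d x \<and> c \<in> nideal d N}"
    proof
      fix z assume z: "z \<in> OK d"
      have "z = x * z + of_nat N * (- (w * z))" using w by (simp add: algebra_simps)
      moreover have "x * z \<in> principal d x" unfolding principal_def using z by auto
      moreover have "of_nat N * (- (w * z)) \<in> nideal d N" unfolding nideal_mem
        using z w by (intro bexI[of _ "- (w * z)"]) auto
      ultimately show "z \<in> {b + c |b c. b \<in> principal d x \<and> c \<in> nideal d N}" by blast
    qed
  qed
qed

lemma IK_carrier_mod: "A \<in> carrier (IK d N) \<Longrightarrow> OKmod A"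
  unfolding IK_def IK_set_def using frac_mod by auto

lemma scale_scale: "(*) a ` ((*) b ` X) = (*) (a*b) ` (X :: complex set)"
  by (auto simp: image_iff mult.assoc)

lemma inv_principal:
  assumes "\<nu> \<noteq> 0" "principal d \<nu> \<in> carrier (IK d N)" "principal d (1/\<nu>) \<in> carrier (IK d N)"
  shows "inv\<^bsub>IK d N\<^esub> (principal d \<nu>) = principal d (1/\<nu>)"
  unfolding m_inv_def
proof (rule the_equality)
  have m: "ideal_mult (principal d \<nu>) (principal d (1/\<nu>)) = OK d"
  proof -
    have "ideal_mult (principal d \<nu>) (principal d (1/\<nu>)) = (*) \<nu> ` principal d (1/\<nu>)"
      by (rule mult_principal[OF principal_mod])
    also have "\<dots> = (*) \<nu> ` ((*) (1/\<nu>) ` OK d)" by (simp only: principal_mult)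
    also have "\<dots> = (*) (\<nu> * (1/\<nu>)) ` OK d" by (simp only: scale_scale)
    also have "\<dots> = OK d" using assms(1) by simp
    finally show ?thesis .
  qed
  show "principal d (1/\<nu>) \<in> carrier (IK d N) \<and>
    principal d \<nu> \<otimes>\<^bsub>IK d N\<^esub> principal d (1/\<nu>) = \<one>\<^bsub>IK d N\<^esub> \<and>
    principal d (1/\<nu>) \<otimes>\<^bsub>IK d N\<^esub> principal d \<nu> = \<one>\<^bsub>IK d N\<^esub>"
    using assms(3) m ideal_mult_comm[of "principal d \<nu>"] by (simp add: IK_def)
next
  fix y assume y: "y \<in> carrier (IK d N) \<and>
    principal d \<nu> \<otimes>\<^bsub>IK d N\<^esub> y = \<one>\<^bsub>IK d N\<^esub> \<and> y \<otimes>\<^bsub>IK d N\<^esub> principal d \<nu> = \<one>\<^bsub>IK d N\<^esub>"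
  then have "(*) \<nu> ` y = OK d" using mult_principal[OF IK_carrier_mod[of y N], of \<nu>] by (simp add: IK_def)
  then have "(*) (1/\<nu>) ` ((*) \<nu> ` y) = principal d (1/\<nu>)" by (simp add: principal_mult)
  then have "(*) ((1/\<nu>) * \<nu>) ` y = principal d (1/\<nu>)" by (simp only: scale_scale)
  then show "y = principal d (1/\<nu>)" using assms(1) by simp
qed

lemma ideal_mult_scale1: "ideal_mult ((*) c ` X) Y = (*) c ` ideal_mult X Y"
proof
  show "ideal_mult ((*) c ` X) Y \<subseteq> (*) c ` ideal_mult X Y"
  proof
    fix z assume "z \<in> ideal_mult ((*) c ` X) Y"
    then obtain as bs where z: "z = sum_list (map2 (*) as bs)" "length as = length bs"
      "set as \<subseteq> (*) c ` X" "set bs \<subseteq> Y" unfolding ideal_mult_def by auto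
    then obtain rs where "as = map ((*) c) rs" "set rs \<subseteq> X" using list_in_image by metis
    with z show "z \<in> (*) c ` ideal_mult X Y" unfolding ideal_mult_def
      by (auto simp: sum_map2_scale)
  qed
  show "(*) c ` ideal_mult X Y \<subseteq> ideal_mult ((*) c ` X) Y"
  proof
    fix z assume "z \<in> (*) c ` ideal_mult X Y"
    then obtain as bs where z: "z = c * sum_list (map2 (*) as bs)" "length as = length bs"
      "set as \<subseteq> X" "set bs \<subseteq> Y" unfolding ideal_mult_def by auto
    then show "z \<in> ideal_mult ((*) c ` X) Y" unfolding ideal_mult_def
      by (intro CollectI exI[of _ "map ((*) c) as"] exI[of _ bs]) (auto simp: sum_map2_scale)
  qed
qed

lemma ideal_mult_scale2: "ideal_mult X ((*) c ` Y) = (*) c ` ideal_mult X Y"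
  using ideal_mult_scale1 ideal_mult_comm by metis

lemma coset_principal:
  assumes sg: "subgroup P (IK d N)" and hP: "principal d \<nu> \<in> P" and nz: "\<nu> \<noteq> 0"
    and inv: "principal d (1/\<nu>) \<in> carrier (IK d N)" and A: "A \<in> carrier (IK d N)"
  shows "P #>\<^bsub>IK d N\<^esub> ((*) \<nu> ` A) = P #>\<^bsub>IK d N\<^esub> A"
proof -
  interpret subgroup P "IK d N" by (rule sg)
  have Pmod: "q \<in> P \<Longrightarrow> OKmod q" for q using subset IK_carrier_mod by auto
  have key: "ideal_mult q ((*) \<nu> ` A) = ideal_mult ((*) \<nu> ` q) A" for q
    by (simp add: ideal_mult_scale1 ideal_mult_scale2)
  have mulP: "q \<in> P \<Longrightarrow> (*) \<nu> ` q \<in> P" for q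
    using m_closed[of q "principal d \<nu>"] hP mult_principal2[OF Pmod, of q \<nu>] by (simp add: IK_def)
  have invh: "inv\<^bsub>IK d N\<^esub> (principal d \<nu>) = principal d (1/\<nu>)"
    using inv_principal[OF nz _ inv] hP subset by auto
  have divP: "q \<in> P \<Longrightarrow> (*) (1/\<nu>) ` q \<in> P" for q
    using m_closed[of q "principal d (1/\<nu>)"] m_inv_closed[OF hP] invh
      mult_principal2[OF Pmod, of q "1/\<nu>"] by (simp add: IK_def)
  show ?thesis
  proof
    show "P #>\<^bsub>IK d N\<^esub> ((*) \<nu> ` A) \<subseteq> P #>\<^bsub>IK d N\<^esub> A"
      unfolding r_coset_def using key mulP by (auto simp: IK_def)
    show "P #>\<^bsub>IK d N\<^esub> A \<subseteq> P #>\<^bsub>IK d N\<^esub> ((*) \<nu> ` A)"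
    proof
      fix z assume "z \<in> P #>\<^bsub>IK d N\<^esub> A"
      then obtain p where p: "p \<in> P" "z = ideal_mult p A" unfolding r_coset_def by (auto simp: IK_def)
      have "(*) \<nu> ` ((*) (1/\<nu>) ` p) = p" using nz by (simp only: scale_scale) simp
      then have "z = ideal_mult ((*) (1/\<nu>) ` p) ((*) \<nu> ` A)" using p key by simp
      then show "z \<in> P #>\<^bsub>IK d N\<^esub> ((*) \<nu> ` A)" unfolding r_coset_def
        using divP[OF p(1)] by (auto simp: IK_def)
    qed
  qed
qed

end



lemma int_subgroup_gen:
  fixes S :: "int set"
  assumes cl: "\<And>x y m. x \<in> S \<Longrightarrow> y \<in> S \<Longrightarrow> x + m * y \<in> S" and k: "k \<in> S" "k > 0"
  shows "\<exists>g>0. g \<in> S \<and> (\<forall>y\<in>S. g dvd y)"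
proof -
  define n where "n = (LEAST n::nat. n > 0 \<and> int n \<in> S)"
  have ex: "nat k > 0 \<and> int (nat k) \<in> S" using k by auto
  have n: "n > 0 \<and> int n \<in> S" unfolding n_def by (rule LeastI[of _ "nat k"]) (rule ex)
  have least: "m > 0 \<Longrightarrow> int m \<in> S \<Longrightarrow> n \<le> m" for m unfolding n_def by (rule Least_le) simp
  have "int n dvd y" if "y \<in> S" for y
  proof -
    have "y + (- (y div int n)) * int n \<in> S" using cl that n by blast
    then have r: "y mod int n \<in> S" by (metis add.commute minus_mult_minus mod_div_mult_eq
        mult_minus_left diff_conv_add_uminus minus_div_mult_eq_mod)
    have "y mod int n \<ge> 0" "y mod int n < int n" using n by auto
    show ?thesis
    proof (rule ccontr)
      assume "\<not> int n dvd y"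
      then have "y mod int n > 0" using \<open>y mod int n \<ge> 0\<close> by (simp add: dvd_eq_mod_eq_0 order_le_less)
      then have "n \<le> nat (y mod int n)" using least[of "nat (y mod int n)"] r by auto
      then have "int n \<le> y mod int n" using \<open>y mod int n \<ge> 0\<close> by (simp add: le_nat_iff)
      then show False using \<open>y mod int n < int n\<close> by linarith
    qed
  qed
  then show ?thesis using n by (intro exI[of _ "int n"]) auto
qed

lemma coprime_lift:
  fixes p q N :: int
  assumes "N > 0" "gcd (gcd p q) N = 1"
  shows "\<exists>k l. coprime (p + k * N) (q + l * N)"
proof (cases "q = 0")
  case True
  then have "coprime p N" using assms by (simp add: coprime_iff_gcd_eq_1)
  then show ?thesis using True by (intro exI[of _ 0] exI[of _ 1]) simp
next
  case False
  define S where "S = {l::int. prime l \<and> l dvd q \<and> \<not> l dvd p}"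
  have finS: "finite S"
  proof -
    have "S \<subseteq> {-\<bar>q\<bar>..\<bar>q\<bar>}" unfolding S_def using False
      by (auto dest!: dvd_imp_le_int)
    then show ?thesis by (rule finite_subset) simp
  qed
  define R where "R = \<Prod>S"
  have "coprime (p + R * N) q"
  proof (rule ccontr)
    assume "\<not> coprime (p + R * N) q"
    then have "\<not> is_unit (gcd (p + R * N) q)" by (simp add: coprime_iff_gcd_eq_1)
    moreover have "gcd (p + R * N) q \<noteq> 0" using False by simp
    ultimately obtain l where l: "prime l" "l dvd gcd (p + R * N) q"
      using prime_divisor_exists by blast
    then have lq: "l dvd q" and lp: "l dvd p + R * N" by auto
    show False
    proof (cases "l dvd p")
      case True
      then have "l dvd R * N" using lp by (metis dvd_add_right_iff)
      then have "l dvd R \<or> l dvd N" using l(1) prime_dvd_mult_iff by blast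
      then show False
      proof
        assume "l dvd R"
        then obtain l' where "l' \<in> S" "l dvd l'" using prime_dvd_prod_iff[OF finS l(1)] unfolding R_def by auto
        then have "l = l'" using l(1) unfolding S_def
          by (metis mem_Collect_eq primes_dvd_imp_eq prime_int_iff)
        then show False using \<open>l' \<in> S\<close> True unfolding S_def by auto
      next
        assume "l dvd N"
        then have "l dvd gcd (gcd p q) N" using True lq by auto
        then show False using assms(2) l(1) by (simp add: prime_int_iff)
      qed
    next
      case False
      then have "l \<in> S" unfolding S_def using l lq by auto
      then have "l dvd R" unfolding R_def using dvd_prodI[OF finS, of l "\<lambda>x. x"] by simp
      then have "l dvd p" using lp by (metis dvd_add_left_iff dvd_mult2)
      then show False using False by simp
    qed
  qed
  then show ?thesis by (intro exI[of _ R] exI[of _ 0]) simp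
qed

lemma fund_d4: "fundamental_disc d \<Longrightarrow> 4 dvd (d - d*d)"
proof -
  assume "fundamental_disc d"
  then have "d mod 4 = 1 \<or> d mod 4 = 0" unfolding fundamental_disc_def by auto
  then show ?thesis
  proof
    assume "d mod 4 = 1"
    then obtain k where "d = 4*k + 1" by (metis mod_div_mult_eq add.commute mult.commute)
    then have "d - d*d = 4 * (-(4*k*k) - k)" by (simp add: algebra_simps)
    then show ?thesis by simp
  next
    assume "d mod 4 = 0"
    then obtain k where "d = 4*k" by auto
    then have "d - d*d = 4 * (k - 4*k*k)" by (simp add: algebra_simps)
    then show ?thesis by simp
  qed
qed

lemma sq_mod4: "(x::int)^2 mod 4 = 0 \<or> x^2 mod 4 = 1"
proof -
  have "x mod 2 = 0 \<or> x mod 2 = 1" by auto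
  then show ?thesis
  proof
    assume "x mod 2 = 0" then obtain k where "x = 2*k" by auto
    then show ?thesis by (simp add: power2_eq_square algebra_simps)
  next
    assume "x mod 2 = 1" then obtain k where "x = 2*k+1" by (metis mod_div_mult_eq add.commute mult.commute)
    then have "x^2 = 4*(k*k+k) + 1" by (simp add: power2_eq_square algebra_simps)
    moreover have "\<forall>t::int. (4*t+1) mod 4 = 1" by presburger
    ultimately show ?thesis by metis
  qed
qed

lemma fund_primitive:
  assumes fd: "fundamental_disc d" and k: "k > 0" "k dvd a" "k dvd b" "k dvd c" and disc: "b^2 - 4*a*c = d"
  shows "k = 1"
proof -
  obtain a' b' c' where abc: "a = k*a'" "b = k*b'" "c = k*c'" using k by (auto elim!: dvdE)
  define d' where "d' = b'^2 - 4*a'*c'"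
  have dd: "d = k^2 * d'" unfolding d'_def using disc abc by (simp add: power2_eq_square algebra_simps)
  have d'm: "d' mod 4 = 0 \<or> d' mod 4 = 1"
  proof -
    have "d' mod 4 = b'^2 mod 4" unfolding d'_def by (simp add: mod_diff_eq[symmetric] mult.assoc)
    then show ?thesis using sq_mod4[of b'] by simp
  qed
  have sqk: "k^2 dvd d" using dd by simp
  from fd consider "d mod 4 = 1" "squarefree d"
    | m where "d = 4*m" "m mod 4 = 2 \<or> m mod 4 = 3" "squarefree m"
    unfolding fundamental_disc_def by auto
  then show ?thesis
  proof cases
    case 1
    then have "is_unit k" using sqk unfolding squarefree_def by (simp add: power2_eq_square)
    then show ?thesis using k by simp
  next
    case (2 m)
    show ?thesis
    proof (cases "even k")
      case True
      then obtain j where j: "k = 2*j" by auto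
      then have "4 * (j*j*d') = 4*m" using dd 2 by (simp add: power2_eq_square algebra_simps)
      then have m: "m = j*j*d'" by simp
      have "j^2 dvd m" using m by (simp add: power2_eq_square)
      then have "is_unit j" using 2(3) unfolding squarefree_def by blast
      then have "j = 1" using j k by simp
      then have "m = d'" using m by simp
      then have "d' mod 4 = 2 \<or> d' mod 4 = 3" using 2(2) by simp
      then have False using d'm 2(2) by linarith
      then show ?thesis ..
    next
      case False
      have "coprime (k^2) 4"
      proof -
        have "coprime k 2" using False by simp
        then have "coprime (k^2) (2^2)" by (simp only: coprime_power_left_iff coprime_power_right_iff simp_thms)
        then show ?thesis by (simp only: power2_eq_square) simp
      qed
      moreover have "k^2 dvd 4*m" using sqk 2 by simp
      ultimately have "k^2 dvd m" using coprime_dvd_mult_right_iff by blast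
      then have "is_unit k" using 2(3) unfolding squarefree_def by (simp add: power2_eq_square)
      then show ?thesis using k by simp
    qed
  qed
qed




context qf begin

lemma form_extract:
  assumes fd: "fundamental_disc d" and Im: "Im \<omega> > 0"
    and h1: "\<theta> = of_int s0 + of_int a * \<omega>" and h2: "\<theta> * \<omega> = of_int s1 + of_int t1 * \<omega>"
  shows "a > 0 \<and> (a, 2*s0 - d, -s1) \<in> Qforms d \<and> omegaQ d (a, 2*s0 - d, -s1) = \<omega>
         \<and> Im \<omega> = Im \<theta> / of_int a"
proof -
  have "Im \<theta> = of_int a * Im \<omega>" using arg_cong[OF h1, of Im] by simp
  then have apos: "a > 0" using Im_th_pos[OF dneg] Im by (smt (verit) mult_nonpos_nonneg of_int_le_0_iff)
  have Imw: "Im \<omega> = Im \<theta> / of_int a" using \<open>Im \<theta> = _\<close> apos by simp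
  define b where "b = 2*s0 - d"
  have aC: "(of_int a :: complex) \<noteq> 0" using apos by simp
  have w: "\<omega> = (- of_int b + sqrt_disc d) / (2 * of_int a)"
  proof -
    have "\<omega> = (\<theta> - of_int s0) / of_int a" using h1 aC by (simp add: field_simps)
    then show ?thesis unfolding b_def th_def using aC by (simp add: field_simps)
  qed
  define c0 :: complex where "c0 = (of_int b * of_int b - of_int d) / (4 * of_int a)"
  have quad: "of_int a * \<omega> * \<omega> + of_int b * \<omega> + c0 = 0"
  proof -
    have "(2 * of_int a * \<omega> + of_int b) = sqrt_disc d" using w aC by (simp add: field_simps)
    then have "(2 * of_int a * \<omega> + of_int b) * (2 * of_int a * \<omega> + of_int b) = of_int d"
      using sd_sq[OF dneg] by simp
    then show ?thesis unfolding c0_def using aC by (simp add: field_simps)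
  qed
  have "\<theta> * \<omega> = of_int s0 * \<omega> + of_int a * \<omega> * \<omega>" unfolding h1 by (simp add: algebra_simps)
  also have "\<dots> = (of_int s0 - of_int b) * \<omega> - c0"
  proof -
    have "of_int a * \<omega> * \<omega> = (of_int a * \<omega> * \<omega> + of_int b * \<omega> + c0) - of_int b * \<omega> - c0"
      by (simp add: algebra_simps)
    then have X: "of_int a * \<omega> * \<omega> = - (of_int b * \<omega>) - c0" using quad by simp
    show ?thesis by (subst X) (simp add: algebra_simps)
  qed
  finally have "of_int s1 + of_int t1 * \<omega> = (of_int s0 - of_int b) * \<omega> - c0" using h2 by simp
  then have e: "(of_int (s0 - b - t1)) * \<omega> = of_int s1 + c0" by (simp add: algebra_simps)
  have c0real: "Im c0 = 0" unfolding c0_def by simp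
  from arg_cong[OF e, of Im] have "real_of_int (s0 - b - t1) * Im \<omega> = 0" using c0real by simp
  then have "s0 - b - t1 = 0" using Im by simp
  with e have "of_int s1 + c0 = 0" by simp
  then have "c0 = - of_int s1" by (metis add.commute add_eq_0_iff)
  then have "(of_int b * of_int b - of_int d :: complex) = 4 * of_int a * (- of_int s1)"
    unfolding c0_def using aC by (simp add: field_simps)
  then have disc: "b*b - d = 4 * a * (- s1)" by (metis (mono_tags) of_int_eq_iff of_int_diff of_int_mult of_int_numeral of_int_minus)
  have cpos: "- s1 > 0"
  proof -
    have "b*b \<ge> 0" by simp
    then have "4 * a * (-s1) > 0" using disc dneg by linarith
    then show ?thesis using apos by (simp add: zero_less_mult_iff mult_less_0_iff)
  qed
  define k where "k = gcd (gcd a b) (-s1)"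
  have "k > 0" unfolding k_def using apos by (simp add: gcd_pos_int)
  moreover have "k dvd a" "k dvd b" "k dvd (-s1)" unfolding k_def
    by (meson dvd_trans gcd_dvd1 gcd_dvd2)+
  moreover have "b^2 - 4*a*(-s1) = d" using disc by (simp add: power2_eq_square algebra_simps)
  ultimately have "k = 1" using fund_primitive[OF fd, of k a b "-s1"] by blast
  then have "(a, b, -s1) \<in> Qforms d" unfolding Qforms_def k_def using apos cpos disc
    by (simp add: power2_eq_square algebra_simps)
  moreover have "omegaQ d (a, b, -s1) = \<omega>" unfolding omegaQ_def w by simp
  ultimately show ?thesis using apos Imw unfolding b_def by simp
qed

lemma lattice_structure:
  assumes M: "OKmod X" and sub: "X \<subseteq> OK d" and z0: "z0 \<in> X" "z0 \<noteq> 0"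
  shows "\<exists>n g x0. n > 0 \<and> g > 0 \<and> of_int n \<in> X \<and> of_int x0 + of_int g * \<theta> \<in> X \<and>
     (\<forall>z\<in>X. \<exists>p q. z = of_int p * of_int n + of_int q * (of_int x0 + of_int g * \<theta>))"
proof -
  have "cnj z0 \<in> OK d" using z0 sub OK_cnj by auto
  then have "cnj z0 * z0 \<in> X" using OKmodD(3)[OF M] z0 by auto
  moreover obtain m0 where m0: "z0 * cnj z0 = of_int m0" using OK_norm_int z0 sub by auto
  ultimately have m0X: "of_int m0 \<in> X" by (simp add: mult.commute)
  have "complex_of_real ((Re z0)\<^sup>2 + (Im z0)\<^sup>2) = of_int m0" using m0 complex_mult_cnj by metis
  then have "(Re z0)\<^sup>2 + (Im z0)\<^sup>2 = real_of_int m0" by (metis Re_complex_of_real of_real_of_int_eq)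
  moreover have "(Re z0)\<^sup>2 + (Im z0)\<^sup>2 > 0" using z0(2)
    by (metis complex_eq_0 add_nonneg_nonneg order_less_le zero_le_power2)
  ultimately have m0pos: "m0 > 0" by simp
  define Zs where "Zs = {x. (of_int x :: complex) \<in> X}"
  have "\<exists>n>0. n \<in> Zs \<and> (\<forall>y\<in>Zs. n dvd y)"
  proof (rule int_subgroup_gen)
    fix x y m assume "x \<in> Zs" "y \<in> Zs"
    then have "of_int x + of_int m * of_int y \<in> X" unfolding Zs_def
      using OKmodD(2)[OF M] OKmod_int[OF M] by auto
    then show "x + m * y \<in> Zs" unfolding Zs_def by simp
  qed (use m0X m0pos Zs_def in auto)
  then obtain n where n: "n > 0" "of_int n \<in> X" "\<And>y. of_int y \<in> X \<Longrightarrow> n dvd y"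
    unfolding Zs_def by auto
  define Ys where "Ys = {y. \<exists>x. of_int x + of_int y * \<theta> \<in> X}"
  have "\<exists>g>0. g \<in> Ys \<and> (\<forall>y\<in>Ys. g dvd y)"
  proof (rule int_subgroup_gen)
    fix x y m assume "x \<in> Ys" "y \<in> Ys"
    then obtain x1 y1 where "of_int x1 + of_int x * \<theta> \<in> X" "of_int y1 + of_int y * \<theta> \<in> X"
      unfolding Ys_def by auto
    then have "(of_int x1 + of_int x * \<theta>) + of_int m * (of_int y1 + of_int y * \<theta>) \<in> X"
      using OKmodD(2)[OF M] OKmod_int[OF M] by auto
    moreover have "(of_int x1 + of_int x * \<theta>) + of_int m * (of_int y1 + of_int y * \<theta>)
      = of_int (x1 + m * y1) + of_int (x + m * y) * \<theta>" by (simp add: algebra_simps)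
    ultimately have "of_int (x1 + m * y1) + of_int (x + m * y) * \<theta> \<in> X" by simp
    then show "x + m * y \<in> Ys" unfolding Ys_def by blast
  next
    have "\<theta> * of_int m0 \<in> X" using OKmodD(3)[OF M] m0X by auto
    then have "of_int 0 + of_int m0 * \<theta> \<in> X" by (simp add: mult.commute)
    then show "m0 \<in> Ys" unfolding Ys_def by blast
  qed (use m0pos in auto)
  then obtain g x0 where g: "g > 0" "of_int x0 + of_int g * \<theta> \<in> X"
     "\<And>y x. of_int x + of_int y * \<theta> \<in> X \<Longrightarrow> g dvd y"
    unfolding Ys_def by auto
  have "\<forall>z\<in>X. \<exists>p q. z = of_int p * of_int n + of_int q * (of_int x0 + of_int g * \<theta>)"
  proof
    fix z assume z: "z \<in> X"
    then obtain x y where xy: "z = of_int x + of_int y * \<theta>" using sub OK_mem by blast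
    then obtain q where q: "y = g * q" using g(3) z by (auto elim!: dvdE)
    have "z + of_int (-q) * (of_int x0 + of_int g * \<theta>) \<in> X"
      using OKmodD(2)[OF M z OKmod_int[OF M g(2), of "-q"]] .
    moreover have "z + of_int (-q) * (of_int x0 + of_int g * \<theta>) = of_int (x - q * x0)"
      unfolding xy q by (simp add: algebra_simps)
    ultimately have "n dvd (x - q * x0)" using n(3) by simp
    then obtain p where "x - q * x0 = n * p" by (auto elim!: dvdE)
    then have "z = of_int p * of_int n + of_int q * (of_int x0 + of_int g * \<theta>)"
      unfolding xy q
      by (simp add: algebra_simps)
    then show "\<exists>p q. z = of_int p * of_int n + of_int q * (of_int x0 + of_int g * \<theta>)" by blast
  qed
  then show ?thesis using n g by blast
qed

lemma core:
  assumes fd: "fundamental_disc d" and Npos: "N > 0"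
    and M: "OKmod X" and sub: "X \<subseteq> OK d" and z0: "z0 \<in> X" "z0 \<noteq> 0"
    and u: "u \<in> X" "u - 1 \<in> nideal d N"
  shows "\<exists>\<beta> Q. \<beta> \<in> OK d \<and> \<beta> \<noteq> 0 \<and> \<beta> - 1 \<in> nideal d N \<and> Q \<in> QformsN d N \<and>
      (\<lambda>z. z / \<beta>) ` X = latQ d Q"
proof -
  obtain n g x0 where n: "n > 0" "g > 0" "of_int n \<in> X" "of_int x0 + of_int g * \<theta> \<in> X"
    and rep: "\<And>z. z \<in> X \<Longrightarrow> \<exists>p q. z = of_int p * of_int n + of_int q * (of_int x0 + of_int g * \<theta>)"
    using lattice_structure[OF M sub z0] by blast
  define E where "E = of_int x0 + of_int g * \<theta>"
  have EX: "E \<in> X" using n E_def by simp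
  have EOK: "E \<in> OK d" using EX sub by auto
  have nOK: "(of_int n :: complex) \<in> OK d" by simp
  obtain p q where upq: "u = of_int p * of_int n + of_int q * E" using rep[OF u(1)] E_def by blast
  obtain w where w: "w \<in> OK d" "u - 1 = of_nat N * w" using u(2) nideal_mem by auto
  define h where "h = gcd (gcd p q) (int N)"
  have h1: "h = 1"
  proof -
    have hpos: "h > 0" unfolding h_def using Npos by (simp add: gcd_pos_int)
    have "h dvd p" "h dvd q" "h dvd int N" unfolding h_def by (meson dvd_trans gcd_dvd1 gcd_dvd2)+
    then obtain p1 q1 N1 where pq: "p = h * p1" "q = h * q1" "int N = h * N1" by (auto elim!: dvdE)
    define v where "v = (of_int p1 * of_int n + of_int q1 * E) - of_int N1 * w"
    have vOK: "v \<in> OK d" unfolding v_def using EOK w(1) by (intro OK_diff OK_add OK_mult) auto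
    have "of_int h * v = u - of_nat N * w"
    proof -
      have "(of_nat N :: complex) = of_int h * of_int N1"
        by (metis of_int_mult of_int_of_nat_eq pq(3))
      then show ?thesis unfolding v_def upq pq by (simp add: algebra_simps)
    qed
    moreover have "u = of_nat N * w + 1" using w(2) by (metis diff_eq_eq)
    ultimately have hv: "of_int h * v = 1" by simp
    obtain x y where "v = of_int x + of_int y * \<theta>" using vOK OK_mem by auto
    then have "of_int (h * x) + of_int (h*y) * \<theta> = of_int 1 + of_int 0 * \<theta>"
      using hv by (simp add: algebra_simps)
    then have "h * x = 1" using coord_unique by blast
    then show ?thesis using hpos by (metis zmult_eq_1_iff less_irrefl pos_zmult_eq_1_iff)
  qed
  obtain k l where kl: "coprime (p + k * int N) (q + l * int N)"
    using coprime_lift[of "int N" p q] Npos h1 h_def by auto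
  define p' where "p' = p + k * int N"
  define q' where "q' = q + l * int N"
  obtain ss vv where "ss * p' + vv * q' = gcd p' q'" using bezout_int by blast
  then have bez: "p' * ss - q' * (-vv) = 1" using kl p'_def q'_def by (simp add: coprime_iff_gcd_eq_1 algebra_simps)
  define r where "r = - vv"
  define \<beta> where "\<beta> = of_int p' * of_int n + of_int q' * E"
  define \<beta>' where "\<beta>' = of_int r * of_int n + of_int ss * E"
  have bX: "\<beta> \<in> X" unfolding \<beta>_def using OKmodD(2)[OF M] OKmod_int[OF M] n(3) EX by auto
  have b'X: "\<beta>' \<in> X" unfolding \<beta>'_def using OKmodD(2)[OF M] OKmod_int[OF M] n(3) EX by auto
  have bOK: "\<beta> \<in> OK d" using bX sub by auto
  have b1: "\<beta> - 1 = of_nat N * (w + of_int k * of_int n + of_int l * E)"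
    unfolding \<beta>_def p'_def q'_def using w(2) upq by (simp add: algebra_simps)
  have b1n: "\<beta> - 1 \<in> nideal d N" unfolding nideal_mem b1 using w(1) EOK
    by (intro bexI[of _ "w + of_int k * of_int n + of_int l * E"] OK_add OK_mult OK_int) auto
  have ImE: "Im E = of_int g * Im \<theta>" unfolding E_def by simp
  define num where "num = Im \<beta>' * Re \<beta> - Re \<beta>' * Im \<beta>"
  have num: "num = of_int n * of_int g * Im \<theta>"
  proof -
    have "num = of_int n * Im E * (of_int p' * of_int ss - of_int q' * of_int r)"
      unfolding num_def \<beta>_def \<beta>'_def by (simp add: algebra_simps)
    also have "of_int p' * of_int ss - of_int q' * of_int r = (1::real)"
      using bez unfolding r_def by (metis of_int_1 of_int_diff of_int_mult)
    finally show ?thesis using ImE by simp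
  qed
  have numpos: "num > 0" unfolding num using n Im_th_pos[OF dneg] by simp
  have bnz: "\<beta> \<noteq> 0" using numpos unfolding num_def by auto
  define Nb where "Nb = (Re \<beta>)\<^sup>2 + (Im \<beta>)\<^sup>2"
  have Nbpos: "Nb > 0" unfolding Nb_def using bnz
    by (metis complex_eq_0 add_nonneg_nonneg order_less_le zero_le_power2)
  define \<omega> where "\<omega> = \<beta>' / \<beta>"
  have Imw: "Im \<omega> = num / Nb" unfolding \<omega>_def num_def Nb_def Im_divide by simp
  have Imwpos: "Im \<omega> > 0" using Imw numpos Nbpos by simp
  have rep2: "\<exists>i j. z = of_int i * \<beta> + of_int j * \<beta>'" if zX: "z \<in> X" for z
  proof -
    obtain pp qq where z: "z = of_int pp * of_int n + of_int qq * E" using rep[OF zX] E_def by blast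
    have "z = of_int (pp * ss - qq * r) * \<beta> + of_int (qq * p' - pp * q') * \<beta>'"
    proof -
      have "of_int (pp * ss - qq * r) * \<beta> + of_int (qq * p' - pp * q') * \<beta>'
         = of_int (pp * (p' * ss - q' * r)) * of_int n + of_int (qq * (p' * ss - q' * r)) * E"
        unfolding \<beta>_def \<beta>'_def by (simp add: algebra_simps)
      also have "\<dots> = z" using bez unfolding r_def z by simp
      finally show ?thesis by simp
    qed
    then show ?thesis by blast
  qed
  have rep3: "\<exists>i j. z / \<beta> = of_int i + of_int j * \<omega>" if zX: "z \<in> X" for z
  proof -
    obtain i j where "z = of_int i * \<beta> + of_int j * \<beta>'" using rep2[OF zX] by blast
    then have "z / \<beta> = of_int i + of_int j * \<omega>" unfolding \<omega>_def using bnz by (simp add: field_simps)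
    then show ?thesis by blast
  qed
  have "\<theta> * \<beta> \<in> X" using OKmodD(3)[OF M OK_th_mem bX] .
  then obtain s0 a where h1': "\<theta> = of_int s0 + of_int a * \<omega>" using rep3 bnz by fastforce
  have "\<theta> * \<beta>' \<in> X" using OKmodD(3)[OF M OK_th_mem b'X] .
  then obtain s1 t1 where "\<theta> * \<beta>' / \<beta> = of_int s1 + of_int t1 * \<omega>" using rep3 by blast
  then have h2': "\<theta> * \<omega> = of_int s1 + of_int t1 * \<omega>" unfolding \<omega>_def by simp
  define Q where "Q = (a, 2*s0 - d, -s1)"
  have fe: "a > 0" "Q \<in> Qforms d" "omegaQ d Q = \<omega>" "Im \<omega> = Im \<theta> / of_int a"
    using form_extract[OF fd Imwpos h1' h2'] unfolding Q_def by auto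
  have Nbeq: "Nb = of_int a * of_int n * of_int g"
  proof -
    have "num / Nb = Im \<theta> / of_int a" using Imw fe(4) by simp
    then have "of_int n * of_int g * Im \<theta> * of_int a = Im \<theta> * Nb" unfolding num
      using Nbpos fe(1) by (simp add: field_simps)
    then show ?thesis using Im_th_pos[OF dneg] by (simp add: algebra_simps)
  qed
  obtain w' where w': "w' \<in> OK d" "\<beta> - 1 = of_nat N * w'" using b1n nideal_mem by auto
  obtain X' Y' where XY: "w' = of_int X' + of_int Y' * \<theta>" using w' OK_mem by auto
  obtain W where W: "w' * cnj w' = of_int W" using OK_norm_int w' by auto
  have "\<beta> * cnj \<beta> = 1 + of_nat N * (w' + cnj w') + of_nat N * of_nat N * (w' * cnj w')"
    using w' by (simp add: algebra_simps eq_diff_eq)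
  also have "w' + cnj w' = of_int (2 * X' + Y' * d)" unfolding XY by (simp add: cnj_th algebra_simps)
  finally have "\<beta> * cnj \<beta> = of_int (1 + int N * ((2 * X' + Y' * d) + int N * W))"
    unfolding W by (simp add: algebra_simps)
  moreover have "\<beta> * cnj \<beta> = complex_of_real Nb" unfolding Nb_def by (rule complex_mult_cnj)
  ultimately have "Nb = of_int (1 + int N * ((2 * X' + Y' * d) + int N * W))"
    by (metis Re_complex_of_real of_real_of_int_eq)
  then have key: "a * n * g = 1 + int N * ((2 * X' + Y' * d) + int N * W)" using Nbeq
    by (metis of_int_eq_iff of_int_mult)
  have cop: "coprime (int N) a"
  proof (rule coprimeI)
    fix c assume "c dvd int N" "c dvd a"
    then have "c dvd a * n * g - int N * ((2 * X' + Y' * d) + int N * W)" by simp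
    then show "is_unit c" using key by simp
  qed
  have QN: "Q \<in> QformsN d N" using fe(2) cop unfolding QformsN_def Q_def by simp
  have "(\<lambda>z. z / \<beta>) ` X = latQ d Q"
  proof
    show "(\<lambda>z. z / \<beta>) ` X \<subseteq> latQ d Q"
    proof
      fix y assume "y \<in> (\<lambda>z. z / \<beta>) ` X"
      then obtain z where "z \<in> X" "y = z / \<beta>" by auto
      then obtain i j where "y = of_int i + of_int j * \<omega>" using rep3 by blast
      then show "y \<in> latQ d Q" unfolding latQ_def fe(3) by (auto simp: add.commute)
    qed
    show "latQ d Q \<subseteq> (\<lambda>z. z / \<beta>) ` X"
    proof
      fix y assume "y \<in> latQ d Q"
      then obtain m m' where y: "y = of_int m * \<omega> + of_int m'" unfolding latQ_def fe(3) by auto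
      have "of_int m' * \<beta> + of_int m * \<beta>' \<in> X"
        using OKmodD(2)[OF M] OKmod_int[OF M] bX b'X by auto
      moreover have "y = (of_int m' * \<beta> + of_int m * \<beta>') / \<beta>"
        unfolding y \<omega>_def using bnz by (simp add: field_simps)
      ultimately show "y \<in> (\<lambda>z. z / \<beta>) ` X" by blast
    qed
  qed
  then show ?thesis using bOK bnz b1n QN by blast
qed

end



theorem proposition2p3:
  fixes d :: int and N :: nat and P :: "complex set set"
    and \<Gamma> :: "(int \<times> int \<times> int \<times> int) set"
  assumes "fundamental_disc d" and "d < 0" and "N > 0"
    and "subgroup P (IK d N)"
    and "PK1 d N \<subseteq> P" and "P \<subseteq> PK d N"
    and "subgroup \<Gamma> SL2Z"
    and welldef: "\<forall>Q\<in>QformsN d N. \<forall>Q'\<in>QformsN d N. form_equiv \<Gamma> Q Q' \<longrightarrow>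
                    P #>\<^bsub>IK d N\<^esub> latQ d Q = P #>\<^bsub>IK d N\<^esub> latQ d Q'"
  shows "\<forall>A\<in>carrier (IK d N). \<exists>Q\<in>QformsN d N.
           P #>\<^bsub>IK d N\<^esub> latQ d Q = P #>\<^bsub>IK d N\<^esub> A"
proof
  fix A assume A: "A \<in> carrier (IK d N)"
  interpret qf d using assms(2) fund_d4[OF assms(1)] by unfold_locales
  from A obtain B C where fA: "frac_ideal d A" and B: "coprime_integral d N B"
    and C: "coprime_integral d N C" and AC: "ideal_mult A C = B"
    unfolding IK_def IK_set_def by auto
  have Amod: "OKmod A" using frac_mod[OF fA] .
  have CO: "C \<subseteq> OK d" using C unfolding coprime_integral_def by auto
  have BO: "B \<subseteq> OK d" using B unfolding coprime_integral_def by auto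
  have "1 \<in> {b + c |b c. b \<in> C \<and> c \<in> nideal d N}" using C OK_1 unfolding coprime_integral_def by blast
  then obtain g0 c0 where g0: "g0 \<in> C" "c0 \<in> nideal d N" "1 = g0 + c0" by blast
  obtain \<gamma> where \<gamma>: "\<gamma> \<in> C" "\<gamma> \<noteq> 0" "\<gamma> - 1 \<in> nideal d N"
  proof (cases "g0 = 0")
    case False
    have "g0 - 1 = - c0" using g0(3) by (simp add: algebra_simps)
    moreover obtain r where "r \<in> OK d" "c0 = of_nat N * r" using g0(2) nideal_mem by auto
    ultimately have "g0 - 1 \<in> nideal d N" unfolding nideal_mem by (intro bexI[of _ "-r"]) auto
    then show ?thesis using that g0 False by blast
  next
    case True
    obtain r where r: "r \<in> OK d" "c0 = of_nat N * r" using g0(2) nideal_mem by auto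
    have "C \<noteq> {0}" using C unfolding coprime_integral_def frac_ideal_def by auto
    moreover have "0 \<in> C" using frac_mod C unfolding coprime_integral_def by (auto simp: OKmod_def)
    ultimately obtain c1 where c1: "c1 \<in> C" "c1 \<noteq> 0" by auto
    have "c1 - 1 = of_nat N * (c1 * r - r)" using g0(3) True r(2) by (simp add: algebra_simps)
    then have "c1 - 1 \<in> nideal d N" unfolding nideal_mem using r(1) c1 CO by (intro bexI[of _ "c1 * r - r"]) auto
    then show ?thesis using that c1 by blast
  qed
  have gOK: "\<gamma> \<in> OK d" using \<gamma> CO by auto
  define A1 where "A1 = (*) \<gamma> ` A"
  have A1mod: "OKmod A1" unfolding A1_def using scale_mod[OF Amod] .
  have gaB: "\<gamma> * a \<in> B" if "a \<in> A" for a
  proof -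
    have "sum_list (map2 (*) [a] [\<gamma>]) \<in> ideal_mult A C" unfolding ideal_mult_def using that \<gamma> by fastforce
    then show ?thesis using AC by (simp add: mult.commute)
  qed
  have A1O: "A1 \<subseteq> OK d" unfolding A1_def using gaB BO by auto
  have "A \<noteq> {0}" using fA unfolding frac_ideal_def by auto
  then obtain a0 where a0: "a0 \<in> A" "a0 \<noteq> 0" using OKmodD(1)[OF Amod] by auto
  have z0: "\<gamma> * a0 \<in> A1" "\<gamma> * a0 \<noteq> 0" unfolding A1_def using a0 \<gamma> by auto
  have "1 \<in> {b + c |b c. b \<in> B \<and> c \<in> nideal d N}" using B OK_1 unfolding coprime_integral_def by blast
  then obtain b c' where bc: "b \<in> B" "c' \<in> nideal d N" "1 = b + c'" by blast
  from bc(1) AC obtain as cs where b: "b = sum_list (map2 (*) as cs)" "length as = length cs"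
    "set as \<subseteq> A" "set cs \<subseteq> C" unfolding ideal_mult_def by auto
  define u where "u = \<gamma> * b"
  have uA1: "u \<in> A1"
  proof -
    have "sum_list (map2 (*) cs (map ((*) \<gamma>) as)) \<in> A1"
      using sum_map2_mem[OF A1mod, of cs "map ((*) \<gamma>) as"] b CO unfolding A1_def by auto
    moreover have "sum_list (map2 (*) cs (map ((*) \<gamma>) as)) = u"
      unfolding u_def b sum_map2_scale2 using sum_map2_comm by metis
    ultimately show ?thesis by simp
  qed
  obtain w1 where w1: "w1 \<in> OK d" "\<gamma> - 1 = of_nat N * w1" using \<gamma>(3) nideal_mem by auto
  obtain r' where r': "r' \<in> OK d" "c' = of_nat N * r'" using bc(2) nideal_mem by auto
  have "u - 1 = of_nat N * (w1 - \<gamma> * r')"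
  proof -
    have "b = 1 - c'" using bc(3) by (simp add: algebra_simps)
    then have "u = \<gamma> * (1 - c')" unfolding u_def by simp
    then show ?thesis using w1(2) r'(2) by (simp add: algebra_simps)
  qed
  then have u1: "u - 1 \<in> nideal d N" unfolding nideal_mem using w1 r' gOK
    by (intro bexI[of _ "w1 - \<gamma> * r'"]) auto
  obtain \<beta> Q where \<beta>: "\<beta> \<in> OK d" "\<beta> \<noteq> 0" "\<beta> - 1 \<in> nideal d N" and Q: "Q \<in> QformsN d N"
    and lat: "(\<lambda>z. z / \<beta>) ` A1 = latQ d Q"
    using core[OF assms(1) assms(3) A1mod A1O z0 uA1 u1] by blast
  define \<nu> where "\<nu> = \<gamma> / \<beta>"
  have latA: "latQ d Q = (*) \<nu> ` A" unfolding lat[symmetric] A1_def \<nu>_def by (auto simp: image_iff)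
  have nz: "\<nu> \<noteq> 0" unfolding \<nu>_def using \<gamma> \<beta> by simp
  have copg: "coprime_integral d N (principal d \<gamma>)" using coprime_principal gOK \<gamma> by blast
  have copb: "coprime_integral d N (principal d \<beta>)" using coprime_principal \<beta> by blast
  obtain w2 where w2: "\<beta> - 1 = of_nat N * w2" "w2 \<in> OK d" using \<beta>(3) nideal_mem by auto
  have gb: "\<gamma> - \<beta> \<in> nideal d N" unfolding nideal_mem
  proof (intro bexI[of _ "w1 - w2"])
    show "\<gamma> - \<beta> = of_nat N * (w1 - w2)" using w1 w2 by (simp add: algebra_simps)
  qed (use w1 w2 in auto)
  have nuK: "\<nu> \<in> Kfield d" unfolding \<nu>_def using Kfield_divide OK_Kfield gOK \<beta> by blast
  have "principal d \<nu> \<in> PK1 d N" unfolding PK1_def mult_cong_one_def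
    using nuK nz gOK \<beta> \<gamma> copg copb gb \<nu>_def by blast
  then have hP: "principal d \<nu> \<in> P" using assms(5) by auto
  have inv: "principal d (1/\<nu>) \<in> carrier (IK d N)"
  proof -
    have "1/\<nu> \<in> Kfield d" unfolding \<nu>_def using Kfield_divide OK_Kfield gOK \<beta> by simp
    then have fr: "frac_ideal d (principal d (1/\<nu>))" using frac_principal nz by simp
    have "ideal_mult (principal d (1/\<nu>)) (principal d \<gamma>) = (*) (1/\<nu>) ` ((*) \<gamma> ` OK d)"
      using mult_principal[OF principal_mod] by (simp only: principal_mult)
    also have "\<dots> = (*) \<beta> ` OK d" unfolding scale_scale \<nu>_def using \<gamma> by simp
    finally have "ideal_mult (principal d (1/\<nu>)) (principal d \<gamma>) = principal d \<beta>" by (simp only: principal_mult)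
    then show ?thesis unfolding IK_def IK_set_def using fr copg copb by auto
  qed
  have "P #>\<^bsub>IK d N\<^esub> latQ d Q = P #>\<^bsub>IK d N\<^esub> A"
    unfolding latA using coset_principal[OF assms(4) hP nz inv A] .
  then show "\<exists>Q\<in>QformsN d N. P #>\<^bsub>IK d N\<^esub> latQ d Q = P #>\<^bsub>IK d N\<^esub> A" using Q by blast
qed


end
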